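(* Let $\psi$ be a bounded complexity measure, $k\in\omega\setminus\{0,1\}$, $A$ a nontrivial closed class of decision tables from $\mathcal M_k^\infty$, and suppose $\mathcal H^\infty_{\psi,A}$ is everywhere defined. Then $\mathcal H^\infty_{\psi,A}$ is nondecreasing and $\mathcal H^\infty_{\psi,A}(0)=0$. Moreover: (a) if the function $\psi^d$ is bounded from above on $A$, then there is a constant $c\ge 0$ with $\mathcal H^\infty_{\psi,A}(n)\le c$ for all $n\in\omega$; (b) if $\psi^d$ is not bounded from above on $A$, then there exists an infinite subset $D\subseteq\omega$ such that $\mathcal H^\infty_{\psi,A}(n)\ge H_D(n)$ for all $n\in\omega$.
   Context: Notation: $\omega=\{0,1,2,\dots\}$; $\mathcal P(\omega)$ is the set of nonempty finite subsets of $\omega$; for $k\in\omega\setminus\{0,1\}$, $E_k=\{0,1,\dots,k-1\}$. $P=\{f_i:i\in\omega\}$ is a set of attributes, $f_i\neq f_j$ for $i\ne j$. Decision tables: $\mathcal M_k^\infty$ is the set of rectangular tables filled with numbers from $E_k$, whose columns are labeled with pairwise different attributes from $P$, whose rows are pairwise different, and each row of which is labeled with a set from $\mathcal P(\omega)$ (its set of decisions). The empty table (no rows) is denoted $\Lambda$ and belongs to $\mathcal M_k^\infty$. For $T\in\mathcal M_k^\infty$: $\Delta(T)$ is the set of rows; $\Pi(T)$ is the intersection of the decision sets of all rows (common decisions); $\mathcal M_k^{\infty c}$ is the set of tables having at least one common decision, and $\Lambda\in\mathcal M_k^{\infty c}$; $\mathrm{At}(T)$ is the set of attributes labeling columns.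 For nonempty $T$, $\Omega_k(T)$ is the set of finite words (including the empty word $\lambda$) over the alphabet $\{(f_i,\delta):f_i\in\mathrm{At}(T),\delta\in E_k\}$; for $\alpha=(f_{i_1},\delta_1)\cdots(f_{i_m},\delta_m)$, $T\alpha$ is the subtable of $T$ consisting of the rows having value $\delta_j$ in the column $f_{i_j}$ for all $j$, and $T\lambda=T$. Operations: for $D\subseteq\mathrm{At}(T)$, $I(D,T)$ is obtained from $T$ by deleting the columns labeled with attributes from $D$ and, in each group of rows coinciding on the remaining columns, keeping only the first row; $I(\mathrm{At}(T),T)=\Lambda$. For $\nu:E_k^{|\mathrm{At}(T)|}\to\mathcal P(\omega)$, $J(\nu,T)$ is obtained by replacing the decision set of each row $\bar\delta$ by $\nu(\bar\delta)$. $[T]=\{J(\nu,I(D,T)):D\subseteq\mathrm{At}(T),\ \nu:E_k^{|\mathrm{At}(T)\setminus D|}\to\mathcal P(\omega)\}$; for nonempty $A\subseteq\mathcal M_k^\infty$, $[A]=\bigcup_{T\in A}[T]$. $A$ is a closed class if $[A]=A$; it is nontrivial if it contains a nonempty table. Decision trees: a $k$-decision tree is a finite directed rooted tree with at least two nodes in which the root and the edges leaving the root are unlabeled, each terminal node is labeled with a decision from $\omega$, and each other node is labeled with an attribute from $P$, each edge leaving such a node being labeled with a number from $E_k$. $\mathrm{At}(\Gamma)$ is the set of attributes labeling nodes of $\Gamma$. For a complete path $\tau=v_1,d_1,\dots,v_m,d_m,v_{m+1}$ (from the root to a terminal node), $\pi(\tau)=\lambda$ if $m=1$, and otherwise $\pi(\tau)=(f_{i_2},\delta_2)\cdots(f_{i_m},\delta_m)$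 where $v_j$ is labeled $f_{i_j}$ and $d_j$ is labeled $\delta_j$; $T(\tau)=T\pi(\tau)$. For $T\ne\Lambda$, a nondeterministic decision tree for $T$ is a $k$-decision tree $\Gamma$ with $\mathrm{At}(\Gamma)\subseteq\mathrm{At}(T)$ such that every row of $T$ belongs to $T(\tau)$ for some complete path $\tau$, and for every complete path $\tau$ either $T(\tau)=\Lambda$ or the decision at the terminal node of $\tau$ belongs to $\Pi(T(\tau))$. A deterministic decision tree for $T$ is a nondeterministic decision tree for $T$ in which, additionally, exactly one edge leaves the root and the edges leaving any node that is neither the root nor terminal are labeled with pairwise different numbers. Complexity measures: a partially bounded complexity measure is a function $\psi:P^*\to\omega$ on finite words over $P$ such that for all words $\alpha_1,\alpha_2$: $\psi(\alpha_1)=0$ iff $\alpha_1=\lambda$; $\psi(\alpha_1)$ is invariant under permutation of letters; $\psi(\alpha_1)\le\psi(\alpha_1\alpha_2)$; $\psi(\alpha_1\alpha_2)\le\psi(\alpha_1)+\psi(\alpha_2)$. It is bounded if in addition $\psi(\alpha)\ge|\alpha|$ for all $\alpha$. $\psi$ is extended to words $(f_{i_1},\delta_1)\cdots(f_{i_m},\delta_m)$ by $\psi(f_{i_1}\cdots f_{i_m})$. For a $k$-decision tree $\Gamma$, $\psi(\Gamma)=\max_\tau\psi(\pi(\tau))$ over complete paths. For $T\ne\Lambda$, $\psi^d(T)$ (resp. $\psi^a(T)$) is the minimum of $\psi(\Gamma)$ over deterministic (resp. nondeterministic) decision trees $\Gamma$ for $T$; $\psi^d(\Lambda)=\psi^a(\Lambda)=0$.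 $\mathcal H^\infty_{\psi,A}(n)$ is undefined if the set $\{\psi^d(T):T\in A,\ \psi^a(T)\le n\}$ is infinite, and otherwise equals its maximum. For an infinite set $D=\{n_i:i\in\omega\}\subseteq\omega$ with $n_i<n_{i+1}$, $H_D:\omega\to\omega$ is defined by $H_D(n)=0$ if $n<n_0$ and $H_D(n)=n_i$ if $n_i\le n<n_{i+1}$. *)

theory Defs
  imports Main "HOL-Library.Multiset"
begin

(* Attributes f_i are identified with their indices i :: nat.
   Numbers in E_k are nats < k; decisions are nats. *)

record dtable =
  attrs :: "nat list"
  rows  :: "(nat list \<times> nat set) list"  (* rows (values, decision set), in order *)

definition empty_table :: dtable ("\<Lambda>") where
  "\<Lambda> = \<lparr>attrs = [], rows = []\<rparr>"

definition valid_table :: "nat \<Rightarrow> dtable \<Rightarrow> bool" where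
  "valid_table k T \<longleftrightarrow>
     distinct (attrs T) \<and> distinct (map fst (rows T)) \<and>
     (\<forall>r\<in>set (rows T). length (fst r) = length (attrs T) \<and> (\<forall>x\<in>set (fst r). x < k)
                         \<and> snd r \<noteq> {} \<and> finite (snd r)) \<and>
     (rows T = [] \<longleftrightarrow> attrs T = [])"

definition colval :: "dtable \<Rightarrow> nat list \<Rightarrow> nat \<Rightarrow> nat" where
  "colval T v a = v ! (LEAST i. i < length (attrs T) \<and> attrs T ! i = a)"

definition sub_rows :: "dtable \<Rightarrow> (nat \<times> nat) list \<Rightarrow> (nat list \<times> nat set) list" where
  "sub_rows T w = filter (\<lambda>r. \<forall>p\<in>set w. colval T (fst r) (fst p) = snd p) (rows T)"

definition common :: "(nat list \<times> nat set) list \<Rightarrow> nat set" where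
  "common rs = \<Inter> (snd ` set rs)"

definition dedup :: "(nat list \<times> nat set) list \<Rightarrow> (nat list \<times> nat set) list" where
  "dedup rs = [rs ! i. i \<leftarrow> [0..<length rs], \<forall>j<i. fst (rs ! j) \<noteq> fst (rs ! i)]"

definition del_cols :: "nat set \<Rightarrow> dtable \<Rightarrow> dtable" where
  "del_cols D T =
     (if set (attrs T) \<subseteq> D then \<Lambda>
      else \<lparr>attrs = filter (\<lambda>a. a \<notin> D) (attrs T),
            rows = dedup (map (\<lambda>r. ([fst r ! i. i \<leftarrow> [0..<length (attrs T)], attrs T ! i \<notin> D], snd r))
                              (rows T))\<rparr>)"

definition relabel :: "(nat list \<Rightarrow> nat set) \<Rightarrow> dtable \<Rightarrow> dtable" where
  "relabel \<nu> T = T\<lparr>rows := map (\<lambda>r. (fst r, \<nu> (fst r))) (rows T)\<rparr>"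

definition valid_nu :: "nat \<Rightarrow> nat \<Rightarrow> (nat list \<Rightarrow> nat set) \<Rightarrow> bool" where
  "valid_nu k m \<nu> \<longleftrightarrow> (\<forall>v. length v = m \<and> (\<forall>x\<in>set v. x < k) \<longrightarrow> \<nu> v \<noteq> {} \<and> finite (\<nu> v))"

definition table_closure :: "nat \<Rightarrow> dtable \<Rightarrow> dtable set" where
  "table_closure k T = {relabel \<nu> (del_cols D T) | D \<nu>.
       D \<subseteq> set (attrs T) \<and> valid_nu k (card (set (attrs T) - D)) \<nu>}"

definition closed_class :: "nat \<Rightarrow> dtable set \<Rightarrow> bool" where
  "closed_class k A \<longleftrightarrow> A \<noteq> {} \<and> A \<subseteq> {T. valid_table k T} \<and> (\<Union>T\<in>A. table_closure k T) = A"

definition nontrivial :: "dtable set \<Rightarrow> bool" where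
  "nontrivial A \<longleftrightarrow> (\<exists>T\<in>A. rows T \<noteq> [])"

(* A non-root node is a Leaf (terminal, labelled with a decision)
   or a Node labelled with an attribute whose outgoing edges are (label, subtree).
   A k-decision tree is given by the (nonempty) list of subtrees below the unlabelled root. *)
datatype dtree = Leaf nat | Node nat "(nat \<times> dtree) list"

inductive wf_node :: "nat \<Rightarrow> bool \<Rightarrow> nat set \<Rightarrow> dtree \<Rightarrow> bool" for k det S where
  "wf_node k det S (Leaf d)"
| "a \<in> S \<Longrightarrow> cs \<noteq> [] \<Longrightarrow> (\<And>\<delta> t. (\<delta>, t) \<in> set cs \<Longrightarrow> \<delta> < k) \<Longrightarrow>
   (\<And>\<delta> t. (\<delta>, t) \<in> set cs \<Longrightarrow> wf_node k det S t) \<Longrightarrow>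
   (det \<longrightarrow> distinct (map fst cs)) \<Longrightarrow> wf_node k det S (Node a cs)"

type_synonym ktree = "dtree list"

definition ktree_wf :: "nat \<Rightarrow> bool \<Rightarrow> nat set \<Rightarrow> ktree \<Rightarrow> bool" where
  "ktree_wf k det S ts \<longleftrightarrow> ts \<noteq> [] \<and> (\<forall>t\<in>set ts. wf_node k det S t) \<and> (det \<longrightarrow> length ts = 1)"

inductive node_path :: "dtree \<Rightarrow> (nat \<times> nat) list \<Rightarrow> nat \<Rightarrow> bool" where
  "node_path (Leaf d) [] d"
| "(\<delta>, t) \<in> set cs \<Longrightarrow> node_path t w d \<Longrightarrow> node_path (Node a cs) ((a, \<delta>) # w) d"

(* complete paths tau, represented by (pi(tau), decision at terminal node) *)
definition complete_paths :: "ktree \<Rightarrow> ((nat \<times> nat) list \<times> nat) set" where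
  "complete_paths ts = {(w, d). \<exists>t\<in>set ts. node_path t w d}"

(* det = False: nondeterministic decision tree for T; det = True: deterministic *)
definition is_tree_for :: "nat \<Rightarrow> bool \<Rightarrow> dtable \<Rightarrow> ktree \<Rightarrow> bool" where
  "is_tree_for k det T ts \<longleftrightarrow>
     ktree_wf k det (set (attrs T)) ts \<and>
     (\<forall>r\<in>set (rows T). \<exists>p\<in>complete_paths ts. r \<in> set (sub_rows T (fst p))) \<and>
     (\<forall>p\<in>complete_paths ts. sub_rows T (fst p) = [] \<or> snd p \<in> common (sub_rows T (fst p)))"

definition partially_bounded_measure :: "(nat list \<Rightarrow> nat) \<Rightarrow> bool" where
  "partially_bounded_measure \<psi> \<longleftrightarrow>
     (\<forall>a. \<psi> a = 0 \<longleftrightarrow> a = []) \<and>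
     (\<forall>a b. mset a = mset b \<longrightarrow> \<psi> a = \<psi> b) \<and>
     (\<forall>a b. \<psi> a \<le> \<psi> (a @ b)) \<and>
     (\<forall>a b. \<psi> (a @ b) \<le> \<psi> a + \<psi> b)"

definition bounded_measure :: "(nat list \<Rightarrow> nat) \<Rightarrow> bool" where
  "bounded_measure \<psi> \<longleftrightarrow> partially_bounded_measure \<psi> \<and> (\<forall>a. length a \<le> \<psi> a)"

definition tree_cost :: "(nat list \<Rightarrow> nat) \<Rightarrow> ktree \<Rightarrow> nat" where
  "tree_cost \<psi> ts = Max ((\<lambda>p. \<psi> (map fst (fst p))) ` complete_paths ts)"

definition psi_d :: "(nat list \<Rightarrow> nat) \<Rightarrow> nat \<Rightarrow> dtable \<Rightarrow> nat" where
  "psi_d \<psi> k T = (if rows T = [] then 0 else Inf {tree_cost \<psi> ts | ts. is_tree_for k True T ts})"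

definition psi_a :: "(nat list \<Rightarrow> nat) \<Rightarrow> nat \<Rightarrow> dtable \<Rightarrow> nat" where
  "psi_a \<psi> k T = (if rows T = [] then 0 else Inf {tree_cost \<psi> ts | ts. is_tree_for k False T ts})"

(* H^infty_{psi,A}; None = undefined *)
definition Hset :: "(nat list \<Rightarrow> nat) \<Rightarrow> nat \<Rightarrow> dtable set \<Rightarrow> nat \<Rightarrow> nat set" where
  "Hset \<psi> k A n = {psi_d \<psi> k T | T. T \<in> A \<and> psi_a \<psi> k T \<le> n}"

definition H :: "(nat list \<Rightarrow> nat) \<Rightarrow> nat \<Rightarrow> dtable set \<Rightarrow> nat \<Rightarrow> nat option" where
  "H \<psi> k A n = (if finite (Hset \<psi> k A n) then Some (Max (Hset \<psi> k A n)) else None)"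

definition HD :: "nat set \<Rightarrow> nat \<Rightarrow> nat" where
  "HD D n = (if \<exists>d\<in>D. d \<le> n then Max {d\<in>D. d \<le> n} else 0)"

end

theory Submission
  imports Defs
begin

lemma fin_node_paths: "finite {(w,d). node_path t w d}"
proof (induction t)
  case (Leaf x)
  have "{(w,d). node_path (Leaf x) w d} = {([],x)}"
    by (auto elim: node_path.cases intro: node_path.intros)
  then show ?case by simp
next
  case (Node a cs)
  have "{(w,d). node_path (Node a cs) w d} \<subseteq>
        (\<Union>p\<in>set cs. (\<lambda>(w,d). ((a, fst p)#w, d)) ` {(w,d). node_path (snd p) w d})"
  proof
    fix x assume "x \<in> {(w,d). node_path (Node a cs) w d}"
    then obtain w d where x: "x = (w,d)" "node_path (Node a cs) w d" by blast
    from x(2) obtain \<delta> t w' where "w = (a,\<delta>)#w'" "(\<delta>,t) \<in> set cs" "node_path t w' d"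
      by (cases rule: node_path.cases) auto
    then show "x \<in> (\<Union>p\<in>set cs. (\<lambda>(w,d). ((a, fst p)#w, d)) ` {(w,d). node_path (snd p) w d})"
      using x(1) by force
  qed
  moreover have "finite (\<Union>p\<in>set cs. (\<lambda>(w,d). ((a, fst p)#w, d)) ` {(w,d). node_path (snd p) w d})"
  proof (rule finite_UN_I)
    fix p assume "p \<in> set cs"
    then have "finite {(w,d). node_path (snd p) w d}"
    proof -
      have "snd p \<in> Basic_BNFs.snds p" by (metis prod.collapse prod_set_simps(2) singletonI)
      then show ?thesis using Node.IH[of p "snd p"] \<open>p \<in> set cs\<close> by blast
    qed
    then show "finite ((\<lambda>(w,d). ((a, fst p)#w, d)) ` {(w,d). node_path (snd p) w d})" by simp
  qed simp
  ultimately show ?case by (rule finite_subset)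
qed

lemma np_leaf: "node_path (Leaf x) w d \<longleftrightarrow> w = [] \<and> d = x"
  by (auto elim: node_path.cases intro: node_path.intros)

lemma fin_cp: "finite (complete_paths ts)"
proof -
  have "complete_paths ts = (\<Union>t\<in>set ts. {(w,d). node_path t w d})"
    unfolding complete_paths_def by auto
  then show ?thesis using fin_node_paths by simp
qed

lemma wf_det: "wf_node k True S t \<Longrightarrow> wf_node k False S t"
  by (induction rule: wf_node.induct) (auto intro: wf_node.intros)

lemma tree_det: "is_tree_for k True T ts \<Longrightarrow> is_tree_for k False T ts"
  unfolding is_tree_for_def ktree_wf_def using wf_det by blast

lemma a_le_d:
  assumes "rows T \<noteq> []" "\<exists>ts. is_tree_for k True T ts"
  shows "psi_a \<psi> k T \<le> psi_d \<psi> k T"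
proof -
  let ?Sd = "{tree_cost \<psi> ts | ts. is_tree_for k True T ts}"
  let ?Sa = "{tree_cost \<psi> ts | ts. is_tree_for k False T ts}"
  have "?Sd \<noteq> {}" using assms by auto
  then have "Inf ?Sd \<in> ?Sd" by (rule Inf_nat_def1)
  moreover have "?Sd \<subseteq> ?Sa" using tree_det by blast
  ultimately have "Inf ?Sd \<in> ?Sa" by blast
  then have "Inf ?Sa \<le> Inf ?Sd" by (rule cInf_lower) simp
  then show ?thesis using assms unfolding psi_a_def psi_d_def by simp
qed

lemma psi_d_dich:
  "psi_d \<psi> k T \<le> Inf ({}::nat set) \<or> (rows T \<noteq> [] \<and> (\<exists>ts. is_tree_for k True T ts))"
proof (cases "rows T = []")
  case True
  then show ?thesis unfolding psi_d_def by simp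
next
  case False
  show ?thesis
  proof (cases "\<exists>ts. is_tree_for k True T ts")
    case False
    then have "{tree_cost \<psi> ts | ts. is_tree_for k True T ts} = {}" by blast
    then show ?thesis using \<open>rows T \<noteq> []\<close> unfolding psi_d_def by simp
  qed (use False in simp)
qed

lemma a0_d0:
  assumes "psi_a \<psi> k T = 0" "bounded_measure \<psi>"
  shows "psi_d \<psi> k T = 0"
proof (cases "rows T = []")
  case True
  then show ?thesis unfolding psi_d_def by simp
next
  case False
  then have ne: "rows T \<noteq> []" .
  let ?Sa = "{tree_cost \<psi> ts | ts. is_tree_for k False T ts}"
  let ?Sd = "{tree_cost \<psi> ts | ts. is_tree_for k True T ts}"
  show ?thesis
  proof (cases "?Sa = {}")
    case True
    then have "?Sd = {}" using tree_det by blast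
    then show ?thesis using True assms(1) ne unfolding psi_a_def psi_d_def by simp
  next
    case False
    have "?Sa \<noteq> {}" by fact
  then have "Inf ?Sa \<in> ?Sa" by (rule Inf_nat_def1)
  moreover have "Inf ?Sa = 0" using assms ne unfolding psi_a_def by simp
  moreover obtain ts where ts0: "Inf ?Sa = tree_cost \<psi> ts" "is_tree_for k False T ts"
    using \<open>Inf ?Sa \<in> ?Sa\<close> by blast
  ultimately have ts: "is_tree_for k False T ts" "tree_cost \<psi> ts = 0" by simp_all
  obtain r where r: "r \<in> set (rows T)" using ne by (cases "rows T") auto
  then obtain p where p: "p \<in> complete_paths ts" "r \<in> set (sub_rows T (fst p))"
    using ts(1) unfolding is_tree_for_def by blast
  have "\<psi> (map fst (fst p)) \<le> tree_cost \<psi> ts"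
    unfolding tree_cost_def using p(1) fin_cp[of ts] by (intro Max_ge) simp_all
  then have "\<psi> (map fst (fst p)) = 0" using ts(2) by simp
  have pb: "partially_bounded_measure \<psi>" using assms(2) unfolding bounded_measure_def by (rule conjunct1)
  have psi0: "\<And>a. \<psi> a = 0 \<longleftrightarrow> a = []"
    using pb unfolding partially_bounded_measure_def by (rule conjunct1[THEN spec])
  then have fp: "fst p = []" using \<open>\<psi> (map fst (fst p)) = 0\<close> by simp
  have sr: "sub_rows T [] = rows T" unfolding sub_rows_def by simp
  have "sub_rows T (fst p) = [] \<or> snd p \<in> common (sub_rows T (fst p))"
    using ts(1) p(1) unfolding is_tree_for_def by blast
  then have dC: "snd p \<in> common (rows T)" using fp sr ne by simp
  let ?t = "[Leaf (snd p)]"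
  have cp: "complete_paths ?t = {([], snd p)}"
    unfolding complete_paths_def by (simp add: np_leaf)
  have w1: "ktree_wf k True (set (attrs T)) ?t"
    unfolding ktree_wf_def by (simp add: wf_node.intros(1))
  have w2: "\<forall>r\<in>set (rows T). \<exists>p\<in>complete_paths ?t. r \<in> set (sub_rows T (fst p))"
    unfolding cp using sr by simp
  have w3: "\<forall>q\<in>complete_paths ?t. sub_rows T (fst q) = [] \<or> snd q \<in> common (sub_rows T (fst q))"
    unfolding cp using sr dC by simp
  have it: "is_tree_for k True T ?t"
    unfolding is_tree_for_def using w1 w2 w3 by blast
  have tc: "tree_cost \<psi> ?t = 0"
    unfolding tree_cost_def cp using psi0 by simp
  have "\<exists>ts. 0 = tree_cost \<psi> ts \<and> is_tree_for k True T ts"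
    using it tc by (intro exI[of _ ?t]) simp
  then have "0 \<in> ?Sd" by (simp only: mem_Collect_eq)
  then have "Inf ?Sd \<le> 0" by (rule cInf_lower) simp
  then show "psi_d \<psi> k T = 0" unfolding psi_d_def using ne by simp
  qed
qed

theorem theorem2:
  fixes \<psi> :: "nat list \<Rightarrow> nat" and k :: nat and A :: "dtable set"
  assumes "bounded_measure \<psi>" and "k \<ge> 2" and "closed_class k A" and "nontrivial A"
    and "\<forall>n. H \<psi> k A n \<noteq> None"
  shows "(\<forall>m n. m \<le> n \<longrightarrow> the (H \<psi> k A m) \<le> the (H \<psi> k A n)) \<and> H \<psi> k A 0 = Some 0 \<and>
         ((\<exists>c. \<forall>T\<in>A. psi_d \<psi> k T \<le> c) \<longrightarrow> (\<exists>c. \<forall>n. the (H \<psi> k A n) \<le> c)) \<and>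
         (\<not> (\<exists>c. \<forall>T\<in>A. psi_d \<psi> k T \<le> c) \<longrightarrow>
            (\<exists>D. infinite D \<and> (\<forall>n. HD D n \<le> the (H \<psi> k A n))))"
proof -
  let ?S = "Hset \<psi> k A"
  have fin: "finite (?S n)" for n using assms(5) unfolding H_def by (auto split: if_splits)
  have Hn: "the (H \<psi> k A n) = Max (?S n)" for n using fin unfolding H_def by simp
  have cc: "A \<noteq> {}" "(\<Union>T\<in>A. table_closure k T) = A"
    using assms(3) unfolding closed_class_def by simp_all
  obtain T0 where T0: "T0 \<in> A" using cc(1) by blast
  have vn: "valid_nu k (card (set (attrs T0) - set (attrs T0))) (\<lambda>_. {0})"
    unfolding valid_nu_def by simp
  have "relabel (\<lambda>_. {0}) (del_cols (set (attrs T0)) T0) \<in> table_closure k T0"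
    unfolding table_closure_def using vn by blast
  moreover have "relabel (\<lambda>_. {0}) (del_cols (set (attrs T0)) T0) = \<Lambda>"
    unfolding relabel_def del_cols_def empty_table_def by simp
  ultimately have "\<Lambda> \<in> table_closure k T0" by simp
  then have LA: "\<Lambda> \<in> A" using T0 cc(2) by blast
  have "rows \<Lambda> = []" unfolding empty_table_def by simp
  then have "psi_a \<psi> k \<Lambda> = 0" "psi_d \<psi> k \<Lambda> = 0" unfolding psi_a_def psi_d_def by auto
  then have zero: "0 \<in> ?S n" for n using LA unfolding Hset_def by force
  have mono_S: "m \<le> n \<Longrightarrow> ?S m \<subseteq> ?S n" for m n unfolding Hset_def by auto
  have mono: "m \<le> n \<Longrightarrow> the (H \<psi> k A m) \<le> the (H \<psi> k A n)" for m n
  proof -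
    assume mn: "m \<le> n"
    have ne: "?S m \<noteq> {}" using zero[of m] by blast
    show ?thesis unfolding Hn by (rule Max_mono[OF mono_S[OF mn] ne fin])
  qed
  have ge: "T \<in> A \<Longrightarrow> psi_a \<psi> k T \<le> n \<Longrightarrow> psi_d \<psi> k T \<le> the (H \<psi> k A n)" for T n
    unfolding Hn using fin by (intro Max_ge) (auto simp: Hset_def)
  have S0: "?S 0 = {0}"
    using zero a0_d0[OF _ assms(1)] unfolding Hset_def by fastforce
  have H0: "H \<psi> k A 0 = Some 0" unfolding H_def S0 by simp
  have partA: "(\<exists>c. \<forall>T\<in>A. psi_d \<psi> k T \<le> c) \<longrightarrow> (\<exists>c. \<forall>n. the (H \<psi> k A n) \<le> c)"
  proof
    assume "\<exists>c. \<forall>T\<in>A. psi_d \<psi> k T \<le> c"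
    then obtain c where c: "\<forall>T\<in>A. psi_d \<psi> k T \<le> c" by blast
    have "the (H \<psi> k A n) \<le> c" for n
    proof -
      have ne: "?S n \<noteq> {}" using zero[of n] by blast
      have "\<forall>x\<in>?S n. x \<le> c" using c unfolding Hset_def by blast
      then show ?thesis unfolding Hn using Max_le_iff[OF fin ne] by blast
    qed
    then show "\<exists>c. \<forall>n. the (H \<psi> k A n) \<le> c" by blast
  qed
  have partB: "\<not> (\<exists>c. \<forall>T\<in>A. psi_d \<psi> k T \<le> c) \<longrightarrow>
            (\<exists>D. infinite D \<and> (\<forall>n. HD D n \<le> the (H \<psi> k A n)))"
  proof
    assume unb: "\<not> (\<exists>c. \<forall>T\<in>A. psi_d \<psi> k T \<le> c)"
    define D where "D = {n. n \<le> the (H \<psi> k A n)}"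
    have big: "\<exists>m\<in>D. N < m" for N
    proof (rule ccontr)
      assume nb: "\<not> (\<exists>m\<in>D. N < m)"
      have "psi_d \<psi> k T \<le> max (Inf ({}::nat set)) (the (H \<psi> k A N))" if T: "T \<in> A" for T
      proof (cases "psi_d \<psi> k T \<le> Inf ({}::nat set)")
        case False
        then have "rows T \<noteq> [] \<and> (\<exists>ts. is_tree_for k True T ts)"
          using psi_d_dich by blast
        then have ad: "psi_a \<psi> k T \<le> psi_d \<psi> k T" using a_le_d by blast
        have "psi_a \<psi> k T \<le> N"
        proof (rule ccontr)
          assume "\<not> psi_a \<psi> k T \<le> N"
          moreover have "psi_a \<psi> k T \<in> D"
            using ge[OF T order_refl] ad unfolding D_def by simp
          ultimately show False using nb by auto
        qed
        then show ?thesis using ge[OF T] by fastforce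
      qed simp
      then show False using unb by blast
    qed
    have infD: "infinite D"
    proof
      assume "finite D"
      then have "\<exists>m\<in>D. Max D < m" using big by blast
      then show False using \<open>finite D\<close> by (meson Max_ge not_le)
    qed
    have "HD D n \<le> the (H \<psi> k A n)" for n
    proof (cases "\<exists>d\<in>D. d \<le> n")
      case True
      let ?M = "{d\<in>D. d \<le> n}"
      have "finite ?M" by simp
      moreover have "?M \<noteq> {}" using True by blast
      ultimately have "Max ?M \<in> ?M" by (rule Max_in)
      then have "Max ?M \<le> the (H \<psi> k A (Max ?M))" "Max ?M \<le> n" unfolding D_def by auto
      then have "Max ?M \<le> the (H \<psi> k A n)" using mono by (meson le_trans)
      then show ?thesis unfolding HD_def using True by simp
    next
      case False
      then show ?thesis unfolding HD_def by simp
    qed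
    then show "\<exists>D. infinite D \<and> (\<forall>n. HD D n \<le> the (H \<psi> k A n))" using infD by blast
  qed
  show ?thesis using mono H0 partA partB by blast
qed

end
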